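(* There exists a probability distribution $\gamma$ on $\mathbb{Z}_7$ such that $\hat{\gamma}(3)=\hat{\gamma}(-3)$ and the random walk on $\mathbb{Z}_7$ with step distribution $\gamma$ is reconstructive.
   Context: $\hat{\gamma}(x)=\sum_{k\in\mathbb{Z}_7}\omega_7^{kx}\gamma(k)$ with $\omega_7=e^{-2\pi i/7}$. The random walk has $v(1)$ uniform on $\mathbb{Z}_7$ and independent steps with $\mathbb{P}(v(t+1)-v(t)=k)=\gamma(k)$. It is reconstructive if, for any two labelings $f_1,f_2:\mathbb{Z}_7\to\{0,1\}$, the distributions of $\{f_1(v(t))\}_{t\ge1}$ and $\{f_2(v(t))\}_{t\ge1}$ coincide only if there is $\ell$ with $f_1(k)=f_2(k+\ell)$ for all $k$. *)

theory Defs
  imports Complex_Main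
begin

text \<open>Z_7 is represented by {0..<7} :: nat set; a step distribution is gamma :: nat => real
  (only its values on {0..<7} matter).\<close>

definition is_distribution_Z7 :: "(nat \<Rightarrow> real) \<Rightarrow> bool" where
  "is_distribution_Z7 g \<longleftrightarrow> (\<forall>k<7. g k \<ge> 0) \<and> (\<Sum>k<7. g k) = 1"

definition omega7 :: complex where
  "omega7 = exp (- 2 * of_real pi * \<i> / 7)"

definition fhat :: "(nat \<Rightarrow> real) \<Rightarrow> int \<Rightarrow> complex" where
  "fhat g x = (\<Sum>k<7. omega7 powi (int k * x) * of_real (g k))"

text \<open>Probability that v(1),...,v(n) equals the list xs (all entries in Z_7):
  v(1) uniform, increments i.i.d. with law g.\<close>
definition path_prob :: "(nat \<Rightarrow> real) \<Rightarrow> nat list \<Rightarrow> real" where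
  "path_prob g xs = (1/7) * (\<Prod>i<length xs - 1. g ((xs ! (i+1) + 7 - xs ! i) mod 7))"

definition word_prob :: "(nat \<Rightarrow> real) \<Rightarrow> (nat \<Rightarrow> bool) \<Rightarrow> bool list \<Rightarrow> real" where
  "word_prob g f w =
     (\<Sum>xs\<in>{xs. length xs = length w \<and> set xs \<subseteq> {..<7} \<and> map f xs = w}. path_prob g xs)"

text \<open>Reconstructive: equal laws of the label processes (i.e. equal finite-dimensional
  distributions) imply the labelings agree up to a cyclic shift.\<close>
definition reconstructive :: "(nat \<Rightarrow> real) \<Rightarrow> bool" where
  "reconstructive g \<longleftrightarrow>
     (\<forall>f1 f2 :: nat \<Rightarrow> bool.
        (\<forall>w. word_prob g f1 w = word_prob g f2 w) \<longrightarrow>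
        (\<exists>l<7. \<forall>k<7. f1 k = f2 ((k + l) mod 7)))"

end

theory Submission imports Defs begin

definition s1 :: real where "s1 = sin (pi/7)"
definition s2 :: real where "s2 = sin (2*pi/7)"
definition aa :: real where "aa = s2 / (s1 + s2)"
definition bb :: real where "bb = s1 / (s1 + s2)"
definition gg :: "nat \<Rightarrow> real" where
  "gg k = (if k = 1 then aa else if k = 2 then bb else 0)"

lemma s_pos: "s1 > 0" "s2 > 0"
  unfolding s1_def s2_def by (auto intro!: sin_gt_zero simp: pi_gt_zero)

lemma ab_pos: "aa > 0" "bb > 0" "aa + bb = 1"
proof -
  have "s1 + s2 > 0" using s_pos by simp
  then show "aa > 0" "bb > 0" "aa + bb = 1" using s_pos unfolding aa_def bb_def
    by (auto simp: divide_simps)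
qed

lemma dist_gg: "is_distribution_Z7 gg"
  using ab_pos unfolding is_distribution_Z7_def gg_def
  by (simp add: numeral_eq_Suc lessThan_Suc)

lemma omega_powi: "omega7 powi n = cis (of_int n * (- 2 * pi / 7))"
proof -
  have "omega7 = cis (- 2 * pi / 7)"
    unfolding omega7_def cis_conv_exp by (simp add: algebra_simps)
  then have "omega7 powi n = cis (- 2 * pi / 7) powi n" by simp
  also have "\<dots> = cis (of_int n * (- 2 * pi / 7))" by (rule cis_power_int)
  finally show ?thesis .
qed

lemma fhat_eq: "fhat gg 3 = fhat gg (-3)"
proof -
  have e1: "fhat gg 3 = cis (-6*pi/7) * aa + cis (-12*pi/7) * bb"
    unfolding fhat_def gg_def by (simp add: numeral_eq_Suc lessThan_Suc omega_powi)
  have e2: "fhat gg (-3) = cis (6*pi/7) * aa + cis (12*pi/7) * bb"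
    unfolding fhat_def gg_def by (simp add: numeral_eq_Suc lessThan_Suc omega_powi)
  have a: "sin (6*pi/7) = s1" unfolding s1_def
    using sin_pi_minus[of "pi/7"] by (simp add: field_simps)
  have b: "sin (12*pi/7) = - s2" unfolding s2_def
    using sin_2pi_minus[of "2*pi/7"] by (simp add: field_simps)
  have c: "aa * s1 = bb * s2" unfolding aa_def bb_def by (simp add: field_simps)
  show ?thesis unfolding e1 e2
    by (simp add: complex_eq_iff cis.sel a b c)
qed


definition Ln :: "nat \<Rightarrow> nat list set" where
  "Ln n = {xs. set xs \<subseteq> {..<7} \<and> length xs = n}"

lemma finite_Ln: "finite (Ln n)"
  unfolding Ln_def by (rule finite_lists_length_eq) simp

lemma sum_Ln_Suc: "(\<Sum>xs\<in>Ln (Suc n). F xs) = (\<Sum>y<7. \<Sum>zs\<in>Ln n. F (y#zs))"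
proof -
  have "(\<Sum>xs\<in>Ln (Suc n). F xs) = (\<Sum>p\<in>Ln n \<times> {..<7}. F ((\<lambda>(xs, n). n#xs) p))"
    unfolding Ln_def lists_length_Suc_eq by (subst sum.reindex[OF inj_split_Cons]) (simp add: comp_def)
  also have "\<dots> = (\<Sum>zs\<in>Ln n. \<Sum>y<7. F (y#zs))"
    by (simp add: sum.cartesian_product split_def)
  also have "\<dots> = (\<Sum>y<7. \<Sum>zs\<in>Ln n. F (y#zs))"
    by (rule sum.swap)
  finally show ?thesis .
qed

definition pp :: "(nat \<Rightarrow> real) \<Rightarrow> nat list \<Rightarrow> real" where
  "pp g xs = (\<Prod>i<length xs - 1. g ((xs ! (i+1) + 7 - xs ! i) mod 7))"

lemma pp_single: "pp g [x] = 1" unfolding pp_def by simp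

lemma pp_cons2: "pp g (x # y # ys) = g ((y + 7 - x) mod 7) * pp g (y # ys)"
  unfolding pp_def by (simp del: prod.lessThan_Suc add: prod.lessThan_Suc_shift)

fun V :: "(nat \<Rightarrow> real) \<Rightarrow> (nat \<Rightarrow> bool) \<Rightarrow> nat \<Rightarrow> bool list \<Rightarrow> real" where
  "V g f x [] = 1"
| "V g f x [c] = (if f x = c then 1 else 0)"
| "V g f x (c#d#w) = (if f x = c then (\<Sum>y<7. g ((y + 7 - x) mod 7) * V g f y (d#w)) else 0)"

lemma ML1:
  "(\<Sum>ys\<in>Ln (length w). if map f (x#ys) = c#w then pp g (x#ys) else 0) = V g f x (c#w)"
proof (induction w arbitrary: x c)
  case Nil
  have "Ln 0 = {[]}" unfolding Ln_def by auto
  then show ?case by (simp add: pp_single)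
next
  case (Cons d w)
  have "(\<Sum>ys\<in>Ln (length (d#w)). if map f (x#ys) = c#d#w then pp g (x#ys) else 0)
     = (\<Sum>y<7. \<Sum>zs\<in>Ln (length w). if map f (x#y#zs) = c#d#w then pp g (x#y#zs) else 0)"
    by (simp add: sum_Ln_Suc)
  also have "\<dots> = (\<Sum>y<7. if f x = c then g ((y + 7 - x) mod 7) *
        (\<Sum>zs\<in>Ln (length w). if map f (y#zs) = d#w then pp g (y#zs) else 0) else 0)"
    by (rule sum.cong) (auto simp: pp_cons2 sum_distrib_left intro!: sum.cong)
  also have "\<dots> = V g f x (c#d#w)"
    using Cons.IH by (simp add: sum.If_cases)
  finally show ?case .
qed

lemma word_prob_V: "word_prob g f (c#w) = (1/7) * (\<Sum>x<7. V g f x (c#w))"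
proof -
  have S: "{xs. length xs = length (c#w) \<and> set xs \<subseteq> {..<7} \<and> map f xs = c#w}
      = {xs\<in>Ln (Suc (length w)). map f xs = c#w}" unfolding Ln_def by auto
  have "word_prob g f (c#w) = (\<Sum>xs\<in>Ln (Suc (length w)). if map f xs = c#w then (1/7) * pp g xs else 0)"
    unfolding word_prob_def S path_prob_def pp_def by (auto simp add: sum.inter_filter finite_Ln intro!: sum.cong)
  also have "\<dots> = (\<Sum>x<7. (1/7) * (\<Sum>ys\<in>Ln (length w). if map f (x#ys) = c#w then pp g (x#ys) else 0))"
    unfolding sum_Ln_Suc by (simp add: sum_distrib_left if_distrib cong: if_cong)
  also have "\<dots> = (1/7) * (\<Sum>x<7. V g f x (c#w))"
    unfolding ML1 by (simp add: sum_distrib_left)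
  finally show ?thesis .
qed



fun addl :: "nat list \<Rightarrow> nat list \<Rightarrow> nat list" where
  "addl [] q = q" | "addl p [] = p" | "addl (x#p) (y#q) = (x+y) # addl p q"

fun Pp :: "bool list \<Rightarrow> nat \<Rightarrow> bool list \<Rightarrow> nat list" where
  "Pp L x [] = [1]"
| "Pp L x [c] = (if L!x = c then [1] else [])"
| "Pp L x (c#d#w) = (if L!x = c then addl (0 # Pp L ((x+1) mod 7) (d#w)) (Pp L ((x+2) mod 7) (d#w)) else [])"

definition KK :: "bool list \<Rightarrow> bool list \<Rightarrow> nat list" where
  "KK L w = foldr (\<lambda>x acc. addl (Pp L x w) acc) [0..<7] []"

fun dge :: "nat list \<Rightarrow> nat list \<Rightarrow> bool" where
  "dge [] [] = True" | "dge [] (y#q) = (y = 0 \<and> dge [] q)" | "dge (x#p) [] = True"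
| "dge (x#p) (y#q) = (y \<le> x \<and> dge p q)"

fun dgt :: "nat list \<Rightarrow> nat list \<Rightarrow> bool" where
  "dgt [] q = False" | "dgt (x#p) [] = (0 < x \<or> dgt p [])"
| "dgt (x#p) (y#q) = ((y < x \<and> dge p q) \<or> (y = x \<and> dgt p q))"

definition WW :: "bool list list" where
  "WW = [[False,False],[True,False,True,True,True],[True,False,False,True,False,True],[False,True,True]]"

definition keys :: "bool list \<Rightarrow> nat list list" where
  "keys L = map (KK L) WW"

definition shiftq :: "bool list \<Rightarrow> bool list \<Rightarrow> bool" where
  "shiftq L M = (\<exists>l\<in>set [0..<7]. \<forall>k\<in>set [0..<7]. L!k = M!((k+l) mod 7))"

definition sepk :: "nat list list \<Rightarrow> nat list list \<Rightarrow> bool" where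
  "sepk A B = (\<exists>(p,q)\<in>set (zip A B). dgt p q \<or> dgt q p)"

definition Reps :: "bool list list" where
  "Reps = [[False,False,False,False,False,False,False],[False,False,False,False,False,False,True],[False,False,False,False,False,True,True],[False,False,False,False,True,False,True],[False,False,False,False,True,True,True],[False,False,False,True,False,False,True],[False,False,False,True,False,True,True],[False,False,False,True,True,False,True],[False,False,False,True,True,True,True],[False,False,True,False,False,True,True],[False,False,True,False,True,False,True],[False,False,True,False,True,True,True],[False,False,True,True,False,True,True],[False,False,True,True,True,False,True],[False,False,True,True,True,True,True],[False,True,False,True,False,True,True],[False,True,False,True,True,True,True],[False,True,True,False,True,True,True],[False,True,True,True,True,True,True],[True,True,True,True,True,True,True]]"

lemma check2: "\<forall>i\<in>set [0..<20]. \<forall>j\<in>set [0..<20]. i \<noteq> j \<longrightarrow> sepk (keys (Reps!i)) (keys (Reps!j))"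
  by code_simp

lemma check1: "\<forall>L\<in>set (List.n_lists 7 [True,False]). \<exists>i\<in>set [0..<20]. shiftq L (Reps!i) \<and> keys L = keys (Reps!i)"
  by code_simp


fun evl :: "nat list \<Rightarrow> real \<Rightarrow> real" where
  "evl [] r = 0" | "evl (c#p) r = of_nat c + r * evl p r"

lemma evl_addl: "evl (addl p q) r = evl p r + evl q r"
  by (induction p q rule: addl.induct) (simp_all add: algebra_simps)

lemma evl_nonneg: "r \<ge> 0 \<Longrightarrow> evl p r \<ge> 0"
  by (induction p) auto

lemma dge_le: "dge p q \<Longrightarrow> r \<ge> 0 \<Longrightarrow> evl q r \<le> evl p r"
proof (induction p q rule: dge.induct)
  case 1 then show ?case by simp
next
  case (2 y q)
  then have "evl q r \<le> 0" by simp
  then have "r * evl q r \<le> 0" using 2(3) by (simp add: mult_nonneg_nonpos)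
  with 2 show ?case by simp
next
  case (3 x p)
  then show ?case using evl_nonneg[of r "x#p"] by simp
next
  case (4 x p y q)
  then have "r * evl q r \<le> r * evl p r" by (auto intro: mult_left_mono)
  with 4 show ?case by simp
qed

lemma dgt_lt: "dgt p q \<Longrightarrow> r > 0 \<Longrightarrow> evl q r < evl p r"
proof (induction p q rule: dgt.induct)
  case (1 q) then show ?case by simp
next
  case (2 x p)
  have "evl p r \<ge> 0" using evl_nonneg[of r p] 2 by simp
  show ?case
  proof (cases "0 < x")
    case True
    then show ?thesis using \<open>evl p r \<ge> 0\<close> 2(3) by simp (intro add_pos_nonneg, auto)
  next
    case False
    then have "evl p r > 0" using 2 by simp
    then show ?thesis using 2(3) by simp (intro add_nonneg_pos, auto)
  qed
next
  case (3 x p y q)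
  show ?case
  proof (cases "y < x \<and> dge p q")
    case True
    then have "r * evl q r \<le> r * evl p r" using 3(3) dge_le[of p q r] by (auto intro: mult_left_mono)
    with True show ?thesis by simp
  next
    case False
    with 3 have "y = x" "evl q r < evl p r" by auto
    then show ?thesis using 3(3) by simp
  qed
qed

lemma sum7: "(\<Sum>y<(7::nat). F y) = F 0 + F 1 + F 2 + F 3 + F 4 + F 5 + (F 6 :: real)"
  by (simp add: eval_nat_numeral lessThan_Suc)

lemma sum_gg: assumes "x < 7"
  shows "(\<Sum>y<7. gg ((y + 7 - x) mod 7) * h y) = aa * h ((x+1) mod 7) + bb * h ((x+2) mod 7)"
proof -
  have "x = 0 \<or> x = 1 \<or> x = 2 \<or> x = 3 \<or> x = 4 \<or> x = 5 \<or> x = 6" using assms by auto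
  then show ?thesis unfolding sum7 by (elim disjE) (simp_all add: gg_def numeral_2_eq_2)
qed

lemma V_poly: "x < 7 \<Longrightarrow>
  V gg f x (c#w) = bb ^ length w * evl (Pp (map f [0..<7]) x (c#w)) (aa/bb)"
proof (induction w arbitrary: x c)
  case Nil
  then show ?case by simp
next
  case (Cons d w)
  have bb: "bb > 0" using ab_pos by simp
  have "V gg f x (c#d#w) = (if f x = c then aa * V gg f ((x+1) mod 7) (d#w) + bb * V gg f ((x+2) mod 7) (d#w) else 0)"
    using Cons.prems by (simp add: sum_gg)
  also have "\<dots> = bb ^ length (d#w) * evl (Pp (map f [0..<7]) x (c#d#w)) (aa/bb)"
    using Cons.prems bb by (simp add: Cons.IH evl_addl field_simps)
  finally show ?case .
qed

lemma evl_fold: "evl (foldr (\<lambda>x acc. addl (h x) acc) xs []) r = (\<Sum>x\<leftarrow>xs. evl (h x) r)"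
  by (induction xs) (simp_all add: evl_addl)

lemma word_prob_K: "word_prob gg f (c#w) = (1/7) * bb ^ length w * evl (KK (map f [0..<7]) (c#w)) (aa/bb)"
proof -
  have "word_prob gg f (c#w) = (1/7) * (\<Sum>x<7. bb ^ length w * evl (Pp (map f [0..<7]) x (c#w)) (aa/bb))"
    unfolding word_prob_V by (simp add: V_poly)
  also have "\<dots> = (1/7) * bb ^ length w * evl (KK (map f [0..<7]) (c#w)) (aa/bb)"
    unfolding KK_def evl_fold interv_sum_list_conv_sum_set_nat set_upt atLeast0LessThan
    by (simp add: sum_distrib_left)
  finally show ?thesis .
qed

lemma no_dgt: assumes "\<forall>w. word_prob gg f1 w = word_prob gg f2 w" and "w \<noteq> []"
  shows "\<not> dgt (KK (map f1 [0..<7]) w) (KK (map f2 [0..<7]) w)"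
proof
  assume d: "dgt (KK (map f1 [0..<7]) w) (KK (map f2 [0..<7]) w)"
  obtain c w' where w: "w = c # w'" using assms(2) by (cases w) auto
  have r: "aa/bb > 0" using ab_pos by simp
  have bb: "(1/7) * bb ^ length w' > 0" using ab_pos by simp
  have "evl (KK (map f2 [0..<7]) w) (aa/bb) < evl (KK (map f1 [0..<7]) w) (aa/bb)"
    using dgt_lt[OF d r] .
  then have "(1/7) * bb ^ length w' * evl (KK (map f2 [0..<7]) w) (aa/bb)
     < (1/7) * bb ^ length w' * evl (KK (map f1 [0..<7]) w) (aa/bb)"
    using bb by (simp only: mult_less_cancel_left_pos)
  then show False using assms(1)[rule_format, of w] unfolding w word_prob_K by simp
qed


lemma mod_shift: "l1 < 7 \<Longrightarrow> l2 < (7::nat) \<Longrightarrow> ((k + (l1 + 7 - l2) mod 7) mod 7 + l2) mod 7 = (k + l1) mod 7"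
proof -
  assume a: "l1 < 7" "l2 < 7"
  have "((k + (l1 + 7 - l2) mod 7) mod 7 + l2) mod 7 = (k + (l1 + 7 - l2) + l2) mod 7"
    by (simp add: mod_add_left_eq mod_add_right_eq)
  also have "k + (l1 + 7 - l2) + l2 = (k + l1) + 7" using a by simp
  finally show ?thesis by simp
qed

lemma recon: "reconstructive gg"
  unfolding reconstructive_def
proof (intro allI impI)
  fix f1 f2 :: "nat \<Rightarrow> bool"
  assume H: "\<forall>w. word_prob gg f1 w = word_prob gg f2 w"
  then have H': "\<forall>w. word_prob gg f2 w = word_prob gg f1 w" by simp
  define L1 where "L1 = map f1 [0..<7]"
  define L2 where "L2 = map f2 [0..<7]"
  have m1: "L1 \<in> set (List.n_lists 7 [True,False])" unfolding set_n_lists L1_def by auto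
  have m2: "L2 \<in> set (List.n_lists 7 [True,False])" unfolding set_n_lists L2_def by auto
  from check1 m1 obtain i1 where i1: "i1 \<in> set [0..<20]" "shiftq L1 (Reps!i1)" "keys L1 = keys (Reps!i1)"
    by blast
  from check1 m2 obtain i2 where i2: "i2 \<in> set [0..<20]" "shiftq L2 (Reps!i2)" "keys L2 = keys (Reps!i2)"
    by blast
  show "\<exists>l<7. \<forall>k<7. f1 k = f2 ((k + l) mod 7)"
  proof (cases "i1 = i2")
    case False
    from check2 i1(1) i2(1) False have s: "sepk (keys L1) (keys L2)"
      unfolding i1(3) i2(3) by blast
    have nd1: "\<not> dgt (KK L1 w) (KK L2 w)" if "w \<noteq> []" for w
      using no_dgt[OF H that] unfolding L1_def L2_def .
    have nd2: "\<not> dgt (KK L2 w) (KK L1 w)" if "w \<noteq> []" for w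
      using no_dgt[OF H' that] unfolding L1_def L2_def .
    have "\<not> sepk (keys L1) (keys L2)"
      unfolding sepk_def keys_def WW_def by (simp add: nd1 nd2)
    with s show ?thesis by contradiction
  next
    case True
    define M where "M = Reps ! i1"
    from i1(2) obtain l1 where l1: "l1 < 7" "\<forall>k<7. L1!k = M!((k+l1) mod 7)"
      unfolding shiftq_def M_def by auto
    from i2(2) obtain l2 where l2: "l2 < 7" "\<forall>k<7. L2!k = M!((k+l2) mod 7)"
      unfolding shiftq_def M_def True by auto
    show ?thesis
    proof (intro exI[of _ "(l1 + 7 - l2) mod 7"] conjI allI impI)
      show "(l1 + 7 - l2) mod 7 < 7" by simp
      fix k :: nat assume k: "k < 7"
      have "f1 k = M!((k+l1) mod 7)" using l1(2) k unfolding L1_def by auto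
      also have "\<dots> = M!(((k + (l1 + 7 - l2) mod 7) mod 7 + l2) mod 7)"
        using mod_shift[OF l1(1) l2(1)] by simp
      also have "\<dots> = f2 ((k + (l1 + 7 - l2) mod 7) mod 7)"
        using l2(2)[rule_format, of "(k + (l1 + 7 - l2) mod 7) mod 7"] unfolding L2_def by simp
      finally show "f1 k = f2 ((k + (l1 + 7 - l2) mod 7) mod 7)" .
    qed
  qed
qed

theorem theorem6:
  shows "\<exists>g. is_distribution_Z7 g \<and> fhat g 3 = fhat g (-3) \<and> reconstructive g"
  using dist_gg fhat_eq recon by blast

end
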